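(* Let $T:[0,1]\to[0,1]$ be the tent map, $T(x)=2x$ for $x<1/2$ and $T(x)=2(1-x)$ for $x\ge1/2$, and let $\Lambda=\{\tau\in[0,1]: T^m(\tau)\le\tau\ \text{for all } m\ge0\}$. Let $K_1=\overline{1}$ and, for $j\ge1$, let $K_{j+1}$ be the periodic sequence whose repeating block is obtained by writing the repeating block of $K_j$ twice and replacing the last symbol by its complement. For $s=s_1s_2\dots\in\{0,1\}^{\mathbb N}$ let $\tau(s)=\sum_{k\ge1}t_k2^{-k}$ with $t_k=\sum_{i=1}^k s_i\pmod 2$, and put $\tau_j=\tau(K_j)$. Then $\tau_j\in\Lambda$ for all $j\ge1$ and $\tau_1<\tau_2<\tau_3<\cdots$. *)

theory Defs
  imports Complex_Main
begin

definition tent :: "real \<Rightarrow> real" where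
  "tent x = (if x < 1/2 then 2 * x else 2 * (1 - x))"

definition Lambda :: "real set" where
  "Lambda = {t \<in> {0..1}. \<forall>m::nat. (tent ^^ m) t \<le> t}"

text \<open>Repeating block of K_(j+1), symbols 0/1 as nat. Kblock 0 is the block of K_1.\<close>
primrec Kblock :: "nat \<Rightarrow> nat list" where
  "Kblock 0 = [1]"
| "Kblock (Suc j) = Kblock j @ butlast (Kblock j) @ [1 - last (Kblock j)]"

text \<open>Sequences s = s_1 s_2 ... are functions nat => nat, indexed from 1 (value at 0 unused).\<close>
definition K :: "nat \<Rightarrow> nat \<Rightarrow> nat" where
  "K j k = Kblock (j - 1) ! ((k - 1) mod length (Kblock (j - 1)))"

definition tseq :: "(nat \<Rightarrow> nat) \<Rightarrow> nat \<Rightarrow> nat" where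
  "tseq s k = (\<Sum>i=1..k. s i) mod 2"

definition tau :: "(nat \<Rightarrow> nat) \<Rightarrow> real" where
  "tau s = (\<Sum>n. real (tseq s (Suc n)) / 2 ^ Suc n)"

end

theory Submission
  imports Defs
begin

fun tm :: "nat \<Rightarrow> nat" where
  "tm n = (if n = 0 then 0 else (n mod 2 + tm (n div 2)) mod 2)"
declare tm.simps[simp del]

lemma tm_0[simp]: "tm 0 = 0" by (simp add: tm.simps)
lemma tm_le1: "tm n \<le> 1" by (subst tm.simps) auto
lemma tm_even: "tm (2*x) = tm x"
proof (cases "x = 0")
  case False
  then show ?thesis using tm_le1[of x] by (subst tm.simps) auto
qed simp
lemma tm_odd: "tm (2*x+1) = 1 - tm x"
proof -
  have "tm x = 0 \<or> tm x = 1" using tm_le1[of x] by auto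
  then show ?thesis by (subst tm.simps) auto
qed
lemma tm_1[simp]: "tm (Suc 0) = Suc 0" by (subst tm.simps) simp
lemma tm_pow: "tm (2^j) = 1"
  by (induction j) (auto simp: tm_even)
lemma tm_add_pow: "n < 2^j \<Longrightarrow> tm (n + 2^j) = 1 - tm n"
proof (induction j arbitrary: n)
  case 0 then show ?case by simp
next
  case (Suc j)
  obtain a b where n: "n = 2*a + b" "b < 2" by (metis div_mult_mod_eq mod_less_divisor zero_less_numeral mult.commute)
  have a: "a < 2^j" using Suc.prems n by auto
  have e: "n + 2^Suc j = 2*(a + 2^j) + b" using n by simp
  show ?case
  proof (cases "b = 0")
    case True
    then show ?thesis using e n Suc.IH[OF a] tm_even[of "a + 2^j"] tm_even[of a] by simp
  next
    case False
    then have "b = 1" using n by simp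
    then show ?thesis using e n Suc.IH[OF a] tm_le1[of a] tm_odd[of "a + 2^j"] tm_odd[of a] by simp
  qed
qed


definition q :: "nat \<Rightarrow> nat \<Rightarrow> nat" where "q N n = tm (n mod N)"
definition lexle :: "(nat \<Rightarrow> nat) \<Rightarrow> (nat \<Rightarrow> nat) \<Rightarrow> bool" where
  "lexle a b \<longleftrightarrow> a = b \<or> (\<exists>k. (\<forall>i<k. a i = b i) \<and> a k < b k)"
definition il :: "(nat \<Rightarrow> nat) \<Rightarrow> nat \<Rightarrow> nat" where
  "il w n = (if even n then w (n div 2) else 1 - w (n div 2))"

lemma q_le1: "q N n \<le> 1" using tm_le1[of "n mod N"] by (simp add: q_def)

lemma il_mono: "lexle a b \<Longrightarrow> lexle (il a) (il b)"
  unfolding lexle_def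
proof (elim disjE exE conjE)
  fix k assume h: "\<forall>i<k. a i = b i" "a k < b k"
  have "\<forall>i<2*k. il a i = il b i" using h(1) by (auto simp: il_def)
  moreover have "il a (2*k) < il b (2*k)" using h(2) by (simp add: il_def)
  ultimately show "il a = il b \<or> (\<exists>k. (\<forall>i<k. il a i = il b i) \<and> il a k < il b k)" by blast
qed simp

lemma mod_double: "(2*x) mod (2*N) = 2*(x mod N)" "(2*x+1) mod (2*N) = 2*(x mod N) + 1" for x N :: nat
  by (simp_all add: mod_mult2_eq)

lemma q_double: "q (2*N) = il (q N)"
proof
  fix n
  show "q (2*N) n = il (q N) n"
  proof (cases "even n")
    case True
    then obtain x where "n = 2*x" by blast
    then show ?thesis by (simp add: q_def il_def mod_double tm_even)
  next
    case False
    then obtain x where "n = 2*x+1" using oddE by blast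
    then show ?thesis using mod_double(2)[of x N] tm_odd[of "x mod N"] by (simp add: q_def il_def)
  qed
qed

lemma bit_cases: "(x::nat) \<le> 1 \<Longrightarrow> x = 0 \<or> x = 1" by auto

lemma lexE: "lexle (\<lambda>k. (q (2^j) (m+k) + q (2^j) m) mod 2) (q (2^j))"
proof (induction j arbitrary: m)
  case 0
  then show ?case by (simp add: q_def lexle_def)
next
  case (Suc j)
  define N :: nat where "N = 2^j"
  have N2: "(2::nat)^Suc j = 2*N" by (simp add: N_def)
  have qd: "q (2 * 2^j) = il (q N)" using q_double N_def by simp
  show ?case
  proof (cases "even m")
    case True
    then obtain i where m: "m = 2*i" by blast
    define u' where "u' = (\<lambda>k. (q N (i+k) + q N i) mod 2)"
    have "(\<lambda>k. (q (2^Suc j) (m+k) + q (2^Suc j) m) mod 2) = il u'"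
    proof
      fix n
      show "(q (2^Suc j) (m+n) + q (2^Suc j) m) mod 2 = il u' n"
      proof (cases "even n")
        case True
        then obtain x where "n = 2*x" by blast
        then show ?thesis by (simp add: qd m il_def u'_def)
      next
        case False
        then obtain x where n: "n = 2*x+1" using oddE by blast
        have "m + n = 2*(i+x) + 1" using m n by simp
        then show ?thesis using n bit_cases[OF q_le1[of N "i+x"]] bit_cases[OF q_le1[of N i]]
          by (auto simp: qd m il_def u'_def)
      qed
    qed
    moreover have "lexle u' (q N)" using Suc.IH[of i] by (simp add: u'_def N_def)
    ultimately show ?thesis using il_mono qd by simp
  next
    case False
    then obtain i where m: "m = 2*i+1" using oddE by blast
    show ?thesis
    proof (cases "j = 0")
      case True
      have "(\<lambda>k. (q (2^Suc j) (m+k) + q (2^Suc j) m) mod 2) = q (2^Suc j)"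
      proof
        fix k
        have "tm (n mod 2) = n mod 2" for n
          using mod_less_divisor[of 2 n] by (cases "n mod 2 = 0") auto
        then show "(q (2^Suc j) (m+k) + q (2^Suc j) m) mod 2 = q (2^Suc j) k"
          using True m by (simp add: q_def) presburger
      qed
      then show ?thesis by (simp add: lexle_def)
    next
      case False
      then have N1: "1 mod N = 1" by (simp add: N_def)
      define u where "u = (\<lambda>k. (q (2^Suc j) (m+k) + q (2^Suc j) m) mod 2)"
      have e1: "m + 1 = 2*(i+1)" "m + 2 = 2*(i+1)+1" "m = 2*i+1" using m by simp_all
      have t0: "q (2^Suc j) 0 = 0" by (simp add: q_def)
      have t1: "q (2^Suc j) 1 = 1" using qd by (simp add: il_def q_def)
      have t2: "q (2^Suc j) 2 = 1" using qd N1 by (simp add: il_def q_def)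
      have u0: "u 0 = 0" by (simp add: u_def)
      have il3: "il (q N) (2*(i+1)) = q N (i+1)" "il (q N) (2*i+1) = 1 - q N i"
        "il (q N) (2*(i+1)+1) = 1 - q N (i+1)" by (simp_all add: il_def)
      have "u 1 = (il (q N) (m+1) + il (q N) m) mod 2" by (simp add: u_def qd)
      then have u1: "u 1 = (q N (i+1) + (1 - q N i)) mod 2"
        unfolding e1(1,2) unfolding e1(3) il3 .
      have "u 2 = (il (q N) (m+2) + il (q N) m) mod 2" by (simp add: u_def qd)
      then have u2: "u 2 = ((1 - q N (i+1)) + (1 - q N i)) mod 2"
        unfolding e1(1,2) unfolding e1(3) il3 .
      show ?thesis
      proof (cases "u 1 = 0")
        case True
        have "(\<forall>i'<1. u i' = q (2^Suc j) i') \<and> u 1 < q (2^Suc j) 1" using True u0 t0 t1 by auto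
        then show ?thesis unfolding lexle_def u_def by blast
      next
        case False
        then have "u 1 = 1" "u 2 = 0" using u1 u2 bit_cases[OF q_le1[of N "i+1"]] bit_cases[OF q_le1[of N i]]
          by auto
        then have "(\<forall>i'<2. u i' = q (2^Suc j) i') \<and> u 2 < q (2^Suc j) 2" using u0 t0 t1 t2
          by (auto simp: less_2_cases_iff)
        then show ?thesis unfolding lexle_def u_def by blast
      qed
    qed
  qed
qed


lemma Kblock_len: "length (Kblock j) = 2^j"
proof (induction j)
  case (Suc j)
  have "length (Kblock j) \<ge> 1" using Suc by simp
  then show ?case using Suc by simp
qed simp

lemma Kblock_nth: "i < 2^j \<Longrightarrow> Kblock j ! i = (tm (i+1) + tm i) mod 2"
proof (induction j arbitrary: i)
  case 0 then show ?case by simp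
next
  case (Suc j)
  define L :: nat where "L = 2^j"
  have L1: "L \<ge> 1" by (simp add: L_def)
  have len: "length (Kblock j) = L" by (simp add: Kblock_len L_def)
  have ne: "Kblock j \<noteq> []" using len L1 by auto
  have lastK: "last (Kblock j) = (tm L + tm (L - 1)) mod 2"
    using Suc.IH[of "L - 1"] last_conv_nth[OF ne] len L1 by (simp add: L_def)
  have i: "i < 2*L" using Suc.prems by (simp add: L_def)
  show ?case
  proof (cases "i < L")
    case True
    then show ?thesis using Suc.IH[of i] len by (simp add: nth_append L_def)
  next
    case False
    define r where "r = i - L"
    have ir: "i = L + r" "r < L" using False i by (simp_all add: r_def)
    have A: "Kblock (Suc j) ! i = (butlast (Kblock j) @ [1 - last (Kblock j)]) ! r"
      using ir len by (simp add: nth_append)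
    show ?thesis
    proof (cases "r < L - 1")
      case True
      have "(butlast (Kblock j) @ [1 - last (Kblock j)]) ! r = Kblock j ! r"
        using True len by (simp add: nth_append nth_butlast)
      also have "\<dots> = (tm (r+1) + tm r) mod 2" using Suc.IH[of r] ir by (simp add: L_def)
      finally have B: "Kblock (Suc j) ! i = (tm (r+1) + tm r) mod 2" using A by simp
      have "tm (i+1) = 1 - tm (r+1)" using tm_add_pow[of "r+1" j] True ir by (simp add: L_def add.commute add.left_commute)
      moreover have "tm i = 1 - tm r" using tm_add_pow[of r j] ir by (simp add: L_def add.commute)
      ultimately show ?thesis using B bit_cases[OF tm_le1[of r]] bit_cases[OF tm_le1[of "r+1"]] by auto
    next
      case False
      then have r: "r = L - 1" using ir by simp
      have B: "Kblock (Suc j) ! i = 1 - last (Kblock j)" using A r len by (simp add: nth_append)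
      have "i + 1 = 2^Suc j" using ir r L1 by (simp add: L_def)
      then have t1: "tm (i+1) = 1" by (metis tm_pow)
      have "tm i = 1 - tm (L - 1)" using tm_add_pow[of "L-1" j] ir r L1 by (simp add: L_def add.commute)
      moreover have "tm L = 1" by (simp add: L_def tm_pow)
      ultimately show ?thesis using B t1 lastK bit_cases[OF tm_le1[of "L - 1"]] by auto
    qed
  qed
qed

lemma tseq_Suc: "tseq s (Suc k) = (tseq s k + s (Suc k)) mod 2"
  by (simp add: tseq_def mod_add_left_eq)

lemma tseq_0[simp]: "tseq s 0 = 0" by (simp add: tseq_def)

lemma tseq_le1: "tseq s k \<le> 1" by (simp add: tseq_def)

lemma step_mod: "L \<ge> 1 \<Longrightarrow> r < 2*L \<Longrightarrow> (\<forall>x. x < L \<longrightarrow> tm (x + L) = 1 - tm x) \<Longrightarrow> tm L = 1 \<Longrightarrow>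
   tm ((r+1) mod (2*L)) = (tm r + (tm (r mod L + 1) + tm (r mod L)) mod 2) mod 2"
proof -
  assume L1: "L \<ge> 1" and r: "r < 2*L" and ad: "\<forall>x. x < L \<longrightarrow> tm (x + L) = 1 - tm x" and tL: "tm L = 1"
  show ?thesis
  proof (cases "r < L")
    case True
    then have "r mod L = r" "(r+1) mod (2*L) = r+1" using L1 by auto
    then show ?thesis using bit_cases[OF tm_le1[of r]] bit_cases[OF tm_le1[of "r+1"]] by auto
  next
    case False
    define r' where "r' = r - L"
    have rr: "r = r' + L" "r' < L" using False r by (simp_all add: r'_def)
    have m1: "r mod L = r'" using rr by simp
    show ?thesis
    proof (cases "r' + 1 < L")
      case True
      have "(r+1) mod (2*L) = (r'+1) + L" using rr True by simp
      moreover have "tm (r'+1+L) = 1 - tm (r'+1)" using ad True by blast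
      moreover have "tm r = 1 - tm r'" using ad rr by blast
      ultimately show ?thesis using m1 bit_cases[OF tm_le1[of r']] bit_cases[OF tm_le1[of "r'+1"]] by auto
    next
      case False
      then have "r' + 1 = L" using rr by simp
      then have "r + 1 = 2*L" using rr by simp
      then have "(r+1) mod (2*L) = 0" by simp
      moreover have "tm r = 1 - tm r'" using ad rr by blast
      ultimately show ?thesis using m1 tL \<open>r' + 1 = L\<close> bit_cases[OF tm_le1[of r']] by auto
    qed
  qed
qed

lemma tseq_K: "j \<ge> 1 \<Longrightarrow> tseq (K j) k = q (2^j) k"
proof -
  assume "j \<ge> 1"
  then obtain i where j: "j = Suc i" by (cases j) auto
  define L :: nat where "L = 2^i"
  have L1: "L \<ge> 1" by (simp add: L_def)
  have ad: "\<forall>x. x < L \<longrightarrow> tm (x + L) = 1 - tm x" using tm_add_pow by (simp add: L_def)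
  have tL: "tm L = 1" by (simp add: L_def tm_pow)
  have N: "(2::nat)^j = 2*L" by (simp add: j L_def)
  show ?thesis unfolding N
  proof (induction k)
    case 0 then show ?case by (simp add: q_def)
  next
    case (Suc k)
    have "K j (Suc k) = Kblock i ! (k mod L)" by (simp add: K_def j Kblock_len L_def)
    also have "\<dots> = (tm (k mod L + 1) + tm (k mod L)) mod 2"
      using Kblock_nth[of "k mod L" i] L1 by (simp add: L_def)
    finally have Kk: "K j (Suc k) = (tm (k mod L + 1) + tm (k mod L)) mod 2" .
    define r where "r = k mod (2*L)"
    have r: "r < 2*L" using L1 by (simp add: r_def)
    have kmL: "k mod L = r mod L" by (simp add: r_def mod_mod_cancel)
    have k1: "(Suc k) mod (2*L) = (r+1) mod (2*L)" by (simp add: r_def mod_Suc_eq)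
    show ?case
      using Suc.IH Kk step_mod[OF L1 r ad tL] k1 kmL
      by (simp add: tseq_Suc q_def r_def)
  qed
qed


definition V :: "(nat \<Rightarrow> nat) \<Rightarrow> real" where
  "V d = (\<Sum>n. real (d (Suc n)) / 2 ^ Suc n)"

lemma half_pow: "(1/2::real)^Suc n = 1 / 2^Suc n" by (simp add: power_one_over)

lemma geo_sums: "(\<lambda>n. 1 / (2::real) ^ Suc n) sums 1"
proof -
  have "(\<lambda>n. (1/2::real) ^ Suc n) sums 1" by (rule power_half_series)
  then show ?thesis by (simp only: half_pow)
qed

lemma geo1: "(\<Sum>n. 1 / (2::real) ^ Suc n) = 1"
  using geo_sums sums_unique by metis

lemma geo_summ: "summable (\<lambda>n. 1 / (2::real) ^ Suc n)"
  using geo_sums sums_summable by blast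

lemma summ: "(\<forall>n. d n \<le> 1) \<Longrightarrow> summable (\<lambda>n. real (d (Suc n)) / 2 ^ Suc n)"
  apply (rule summable_comparison_test[OF _ geo_summ])
  apply (rule exI[of _ 0])
  apply (auto simp: divide_right_mono)
  done

lemma V_bounds: "(\<forall>n. d n \<le> 1) \<Longrightarrow> 0 \<le> V d \<and> V d \<le> 1"
proof -
  assume b: "\<forall>n. d n \<le> 1"
  have "0 \<le> V d" unfolding V_def by (rule suminf_nonneg[OF summ[OF b]]) simp
  moreover have "V d \<le> (\<Sum>n. 1 / (2::real) ^ Suc n)" unfolding V_def
    by (rule suminf_le[OF _ summ[OF b] geo_summ]) (use b in \<open>auto simp: divide_right_mono\<close>)
  ultimately show ?thesis using geo1 by simp
qed

lemma V_cong: "(\<forall>n. a (Suc n) = b (Suc n)) \<Longrightarrow> V a = V b"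
  by (simp add: V_def)

lemma V_split: "(\<forall>n. d n \<le> 1) \<Longrightarrow> V d = real (d 1) / 2 + V (\<lambda>n. d (Suc n)) / 2"
proof -
  assume b: "\<forall>n. d n \<le> 1"
  let ?f = "\<lambda>n. real (d (Suc n)) / 2 ^ Suc n"
  have b': "\<forall>n. d (Suc n) \<le> 1" using b by simp
  have "V (\<lambda>n. d (Suc n)) / 2 = (\<Sum>n. real (d (Suc (Suc n))) / 2 ^ Suc n / 2)"
    unfolding V_def by (rule suminf_divide[symmetric]) (rule summ[OF b'])
  also have "\<dots> = (\<Sum>n. ?f (Suc n))" by (simp add: mult.commute)
  also have "\<dots> = V d - real (d 1) / 2" unfolding V_def by (subst suminf_split_head[OF summ[OF b]]) simp
  finally show ?thesis by (simp add: field_simps)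
qed

lemma V_compl: "(\<forall>n. d n \<le> 1) \<Longrightarrow> V (\<lambda>n. 1 - d n) = 1 - V d"
proof -
  assume b: "\<forall>n. d n \<le> 1"
  have "1 - V d = (\<Sum>n. 1 / (2::real) ^ Suc n) - V d" using geo1 by simp
  also have "\<dots> = (\<Sum>n. 1 / (2::real) ^ Suc n - real (d (Suc n)) / 2 ^ Suc n)"
    unfolding V_def by (rule suminf_diff[OF geo_summ summ[OF b]])
  also have "\<dots> = V (\<lambda>n. 1 - d n)" unfolding V_def
    by (rule suminf_cong) (use b in \<open>auto simp: of_nat_diff diff_divide_distrib\<close>)
  finally show ?thesis by simp
qed


lemma V_diff:
  assumes bd: "\<forall>n. d n \<le> 1" and be: "\<forall>n. e n \<le> 1" and eq: "\<forall>i<k. d i = e i"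
    and dk: "d k = 0" and ek: "e k = 1" and k: "k > 0"
  shows "V e - V d = (\<Sum>n. (real (e (Suc (n+k))) - real (d (Suc (n+k)))) / 2 ^ Suc (n+k) + 1 / 2 ^ Suc (n+k))"
proof -
  define h where "h n = real (e (Suc n)) / 2 ^ Suc n - real (d (Suc n)) / 2 ^ Suc n" for n
  define g where "g n = (real (e (Suc (n+k))) - real (d (Suc (n+k)))) / 2 ^ Suc (n+k) + 1 / (2::real) ^ Suc (n+k)" for n
  obtain k' where k': "k = Suc k'" using k by (cases k) auto
  have sh: "summable h" unfolding h_def by (rule summable_diff[OF summ[OF be] summ[OF bd]])
  have "V e - V d = suminf h" unfolding V_def h_def by (rule suminf_diff[OF summ[OF be] summ[OF bd]])
  also have "\<dots> = (\<Sum>n. h (n + k)) + sum h {..<k}" by (rule suminf_split_initial_segment[OF sh])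
  also have "sum h {..<k} = 1 / 2^k"
  proof -
    have "sum h {..<k'} = 0" using eq k' by (auto simp: h_def intro!: sum.neutral)
    then show ?thesis using k' dk ek by (simp add: h_def)
  qed
  also have "(\<Sum>n. 1 / (2::real) ^ Suc (n+k)) = 1 / 2^k"
  proof -
    have "(\<Sum>n. 1 / (2::real) ^ Suc (n+k)) = (\<Sum>n. 1 / (2::real) ^ Suc n / 2^k)"
      by (simp add: power_add mult.assoc)
    also have "\<dots> = 1 / 2^k" by (subst suminf_divide[OF geo_summ]) (simp only: geo1)
    finally show ?thesis .
  qed
  then have "(\<Sum>n. h (n + k)) = suminf g - 1 / 2^k"
  proof -
    assume G: "(\<Sum>n. 1 / (2::real) ^ Suc (n+k)) = 1 / 2^k"
    have s1: "summable (\<lambda>n. h (n+k))" using sh by simp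
    have s2: "summable (\<lambda>n. 1 / (2::real) ^ Suc (n+k))"
      using geo_summ summable_iff_shift[of "\<lambda>n. 1 / (2::real) ^ Suc n" k] by simp
    have "suminf g = (\<Sum>n. h (n+k)) + (\<Sum>n. 1 / (2::real) ^ Suc (n+k))"
      unfolding g_def by (subst suminf_add[OF s1 s2]) (simp add: h_def diff_divide_distrib)
    then show ?thesis using G by simp
  qed
  finally show ?thesis unfolding g_def by simp
qed

lemma g_nonneg: "\<forall>n. d n \<le> 1 \<Longrightarrow> 0 \<le> (real (e m) - real (d m)) / 2 ^ m + 1 / (2::real) ^ m"
proof -
  assume "\<forall>n. d n \<le> 1"
  then have "real (d m) \<le> 1" by simp
  then have "- (1::real) \<le> real (e m) - real (d m)" by simp
  then have "- 1 / (2::real)^m \<le> (real (e m) - real (d m)) / 2 ^ m" by (rule divide_right_mono) simp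
  then show ?thesis by simp
qed

lemma g_summ: "\<forall>n. d n \<le> 1 \<Longrightarrow> \<forall>n. e n \<le> 1 \<Longrightarrow>
  summable (\<lambda>n. (real (e (Suc (n+k))) - real (d (Suc (n+k)))) / 2 ^ Suc (n+k) + 1 / (2::real) ^ Suc (n+k))"
proof -
  assume bd: "\<forall>n. d n \<le> 1" and be: "\<forall>n. e n \<le> 1"
  have s: "summable (\<lambda>n. (real (e (Suc n)) - real (d (Suc n))) / 2 ^ Suc n + 1 / (2::real) ^ Suc n)"
    using summable_add[OF summable_diff[OF summ[OF be] summ[OF bd]] geo_summ] by (simp add: diff_divide_distrib)
  show ?thesis using s summable_iff_shift[of "\<lambda>n. (real (e (Suc n)) - real (d (Suc n))) / 2 ^ Suc n + 1 / (2::real) ^ Suc n" k]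
    by simp
qed

lemma V_le:
  assumes bd: "\<forall>n. d n \<le> 1" and be: "\<forall>n. e n \<le> 1" and eq: "\<forall>i<k. d i = e i"
    and dk: "d k < e k" and k: "k > 0"
  shows "V d \<le> V e"
proof -
  have "d k = 0" "e k = 1" using dk be[rule_format, of k] by auto
  note D = V_diff[OF bd be eq this k]
  have "0 \<le> (\<Sum>n. (real (e (Suc (n+k))) - real (d (Suc (n+k)))) / 2 ^ Suc (n+k) + 1 / (2::real) ^ Suc (n+k))"
    by (rule suminf_nonneg[OF g_summ[OF bd be]]) (rule g_nonneg[OF bd])
  then show ?thesis using D by simp
qed

lemma V_less:
  assumes bd: "\<forall>n. d n \<le> 1" and be: "\<forall>n. e n \<le> 1" and eq: "\<forall>i<k. d i = e i"
    and dk: "d k < e k" and k: "k > 0" and n0: "n0 > k" "d n0 = 0"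
  shows "V d < V e"
proof -
  have "d k = 0" "e k = 1" using dk be[rule_format, of k] by auto
  note D = V_diff[OF bd be eq this k]
  obtain m where m: "n0 = Suc (m + k)" using n0 by (metis add.commute less_iff_Suc_add)
  have "0 < (\<Sum>n. (real (e (Suc (n+k))) - real (d (Suc (n+k)))) / 2 ^ Suc (n+k) + 1 / (2::real) ^ Suc (n+k))"
  proof (subst suminf_pos_iff[OF g_summ[OF bd be]])
    show "\<And>n. 0 \<le> (real (e (Suc (n+k))) - real (d (Suc (n+k)))) / 2 ^ Suc (n+k) + 1 / (2::real) ^ Suc (n+k)"
      by (rule g_nonneg[OF bd])
    have "0 < (real (e (Suc (m+k))) - real (d (Suc (m+k)))) / 2 ^ Suc (m+k) + 1 / (2::real) ^ Suc (m+k)"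
      using n0(2) m by (simp add: add_nonneg_pos)
    then show "\<exists>i. 0 < (real (e (Suc (i+k))) - real (d (Suc (i+k)))) / 2 ^ Suc (i+k) + 1 / (2::real) ^ Suc (i+k)"
      by blast
  qed
  then show ?thesis using D by simp
qed


lemma tseq_shift: "tseq (\<lambda>k. s (k + m)) k = (tseq s (k + m) + tseq s m) mod 2"
proof (induction k)
  case 0 then show ?case by simp
next
  case (Suc k)
  have "tseq (\<lambda>k. s (k + m)) (Suc k) = (tseq (\<lambda>k. s (k + m)) k + s (Suc k + m)) mod 2"
    by (rule tseq_Suc)
  also have "\<dots> = ((tseq s (k + m) + tseq s m) mod 2 + s (Suc (k + m))) mod 2" using Suc by simp
  also have "\<dots> = ((tseq s (k + m) + s (Suc (k + m))) mod 2 + tseq s m) mod 2" by presburger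
  also have "\<dots> = (tseq s (Suc k + m) + tseq s m) mod 2" by (simp add: tseq_Suc)
  finally show ?case .
qed

lemma tau_V: "tau s = V (tseq s)" by (simp add: tau_def V_def)

lemma tent_tau: "tent (tau s) = tau (\<lambda>k. s (Suc k))"
proof -
  define d where "d = tseq s"
  have bd: "\<forall>n. d n \<le> 1" unfolding d_def using tseq_le1 by blast
  have bd': "\<forall>n. d (Suc n) \<le> 1" using bd by simp
  define W where "W = V (\<lambda>n. d (Suc n))"
  have Wb: "0 \<le> W \<and> W \<le> 1" unfolding W_def by (rule V_bounds[OF bd'])
  have sp: "tau s = real (d 1) / 2 + W / 2" unfolding tau_V d_def[symmetric] W_def by (rule V_split[OF bd])
  have sh: "tseq (\<lambda>k. s (Suc k)) k = (d (Suc k) + d 1) mod 2" for k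
    using tseq_shift[of s 1 k] by (simp add: d_def)
  have d2: "d m mod 2 = d m" for m
  proof -
    have "d m < 2" using bd[rule_format, of m] by linarith
    then show ?thesis by simp
  qed
  have c: "(d m + 1) mod 2 = 1 - d m" for m
    using bd[rule_format, of m] by (cases "d m") auto
  show ?thesis
  proof (cases "d 1 = 0")
    case True
    have "tau (\<lambda>k. s (Suc k)) = W" unfolding tau_V W_def
      by (rule V_cong) (use bd True d2 in \<open>auto simp: sh\<close>)
    moreover have "tent (W / 2) = W" using Wb by (auto simp: tent_def)
    moreover have "tau s = W / 2" using sp True by simp
    ultimately show ?thesis by metis
  next
    case False
    then have d1: "d 1 = 1" using bd by (metis bit_cases)
    have "tau (\<lambda>k. s (Suc k)) = V (\<lambda>n. 1 - d (Suc n))" unfolding tau_V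
      by (rule V_cong) (use d1 c in \<open>simp add: sh\<close>)
    also have "\<dots> = 1 - W" unfolding W_def by (rule V_compl[OF bd'])
    finally have "tau (\<lambda>k. s (Suc k)) = 1 - W" .
    moreover have "tent (1/2 + W / 2) = 1 - W" using Wb by (auto simp: tent_def)
    moreover have "tau s = 1/2 + W / 2" using sp d1 by simp
    ultimately show ?thesis by metis
  qed
qed

lemma tent_iter: "(tent ^^ m) (tau s) = tau (\<lambda>k. s (k + m))"
proof (induction m)
  case 0 then show ?case by simp
next
  case (Suc m)
  then show ?case using tent_tau[of "\<lambda>k. s (k + m)"] by simp
qed


lemma tau_K: "j \<ge> 1 \<Longrightarrow> tau (K j) = V (q (2^j))"
  unfolding tau_V using tseq_K by presburger

lemma qbits: "\<forall>n. q N n \<le> 1" using q_le1 by blast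

theorem mainTheorem7:
  shows "(\<forall>j\<ge>1. tau (K j) \<in> Lambda) \<and> (\<forall>j\<ge>1. tau (K j) < tau (K (Suc j)))"
proof (intro conjI allI impI)
  fix j :: nat assume j: "j \<ge> 1"
  define N :: nat where "N = 2^j"
  have tK: "tau (K j) = V (q N)" using tau_K[OF j] by (simp add: N_def)
  have "tau (K j) \<in> {0..1}" using tK V_bounds[OF qbits] by simp
  moreover have "(tent ^^ m) (tau (K j)) \<le> tau (K j)" for m
  proof -
    define u where "u = (\<lambda>k. (q N (m+k) + q N m) mod 2)"
    have "(tent ^^ m) (tau (K j)) = V (tseq (\<lambda>k. K j (k + m)))"
      unfolding tent_iter by (rule tau_V)
    also have "tseq (\<lambda>k. K j (k + m)) = u"
      by (rule ext) (simp add: tseq_shift tseq_K[OF j] u_def N_def add.commute)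
    finally have A: "(tent ^^ m) (tau (K j)) = V u" .
    have bu: "\<forall>n. u n \<le> 1" unfolding u_def using less_Suc_eq_le mod_less_divisor by fastforce
    have L: "lexle u (q N)" unfolding u_def N_def by (rule lexE)
    have "V u \<le> V (q N)"
    proof (cases "u = q N")
      case True then show ?thesis by simp
    next
      case False
      then obtain k where k: "\<forall>i<k. u i = q N i" "u k < q N k" using L unfolding lexle_def by blast
      have "k > 0" using k(2) by (cases k) (auto simp: q_def)
      then show ?thesis by (rule V_le[OF bu qbits k])
    qed
    then show ?thesis using A tK by simp
  qed
  ultimately show "tau (K j) \<in> Lambda" unfolding Lambda_def by blast
next
  fix j :: nat assume j: "j \<ge> 1"
  define N :: nat where "N = 2^j"
  have t1: "tau (K j) = V (q N)" using tau_K[OF j] by (simp add: N_def)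
  have t2: "tau (K (Suc j)) = V (q (2*N))" using tau_K[of "Suc j"] by (simp add: N_def)
  have N0: "N > 0" by (simp add: N_def)
  have eq: "\<forall>i<N. q N i = q (2*N) i" by (simp add: q_def)
  have lt: "q N N < q (2*N) N" using N0 by (simp add: q_def N_def tm_pow)
  have z: "q N (2*N) = 0" by (simp add: q_def)
  have "V (q N) < V (q (2*N))"
    by (rule V_less[OF qbits qbits eq lt N0, of "2*N"]) (use N0 z in auto)
  then show "tau (K j) < tau (K (Suc j))" using t1 t2 by simp
qed

end
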